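(* Let $F$ be a saturated minimally unsatisfiable clause-set, $v$ a singular variable for $F$, and $F' := \mathrm{DP}_v(F)$. 1. For all literals $x$, $\mathrm{ldeg}_{F'}(x)\le\mathrm{ldeg}_F(x)$. 2. Consequently, if $w\neq v$ is a singular variable for $F$, then $w$ is also singular for $F'$.
   Context: Literals are variables $v$ and complements $\overline{v}$; a clause is a finite set of literals with no complementary pair; a clause-set is a finite set of clauses; $\mathrm{var}(F)$ is the set of variables of $F$; $\mathrm{ldeg}_F(x)$ is the number of clauses of $F$ containing literal $x$. $\mathrm{DP}_v(F) := \{C \in F : v \notin \mathrm{var}(C)\} \cup \{(C \cup D)\setminus\{v,\overline{v}\} : C, D \in F,\ C \cap \overline{D} = \{v\}\}$. A minimally unsatisfiable $F$ is saturated if for every $C \in F$ and every literal $y$ with $\mathrm{var}(y) \in \mathrm{var}(F)\setminus \mathrm{var}(C)$, the clause-set $(F\setminus\{C\})\cup\{C\cup\{y\}\}$ is satisfiable. A variable $v$ is singular for $F$ if $\min(\mathrm{ldeg}_F(v),\mathrm{ldeg}_F(\overline{v}))=1$. *)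

theory Defs
  imports Main
begin

datatype 'v lit = Pos 'v | Neg 'v

fun var_lit :: "'v lit \<Rightarrow> 'v" where
  "var_lit (Pos v) = v" | "var_lit (Neg v) = v"

fun comp :: "'v lit \<Rightarrow> 'v lit" where
  "comp (Pos v) = Neg v" | "comp (Neg v) = Pos v"

fun lit_true :: "('v \<Rightarrow> bool) \<Rightarrow> 'v lit \<Rightarrow> bool" where
  "lit_true \<phi> (Pos v) = \<phi> v" | "lit_true \<phi> (Neg v) = (\<not> \<phi> v)"

definition clause :: "'v lit set \<Rightarrow> bool" where
  "clause C \<longleftrightarrow> finite C \<and> (\<forall>x\<in>C. comp x \<notin> C)"

definition clause_set :: "'v lit set set \<Rightarrow> bool" where
  "clause_set F \<longleftrightarrow> finite F \<and> (\<forall>C\<in>F. clause C)"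

definition vars_cl :: "'v lit set \<Rightarrow> 'v set" where
  "vars_cl C = var_lit ` C"

definition vars :: "'v lit set set \<Rightarrow> 'v set" where
  "vars F = (\<Union>C\<in>F. vars_cl C)"

definition ldeg :: "'v lit set set \<Rightarrow> 'v lit \<Rightarrow> nat" where
  "ldeg F x = card {C \<in> F. x \<in> C}"

definition DP :: "'v \<Rightarrow> 'v lit set set \<Rightarrow> 'v lit set set" where
  "DP v F = {C \<in> F. v \<notin> vars_cl C} \<union>
     {(C \<union> D) - {Pos v, Neg v} | C D. C \<in> F \<and> D \<in> F \<and> C \<inter> comp ` D = {Pos v}}"

definition satisfiable :: "'v lit set set \<Rightarrow> bool" where
  "satisfiable F \<longleftrightarrow> (\<exists>\<phi>. \<forall>C\<in>F. \<exists>x\<in>C. lit_true \<phi> x)"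

definition min_unsat :: "'v lit set set \<Rightarrow> bool" where
  "min_unsat F \<longleftrightarrow> clause_set F \<and> \<not> satisfiable F \<and> (\<forall>C\<in>F. satisfiable (F - {C}))"

definition saturated :: "'v lit set set \<Rightarrow> bool" where
  "saturated F \<longleftrightarrow> min_unsat F \<and>
     (\<forall>C\<in>F. \<forall>y. var_lit y \<in> vars F - vars_cl C \<longrightarrow>
        satisfiable ((F - {C}) \<union> {C \<union> {y}}))"

definition singular :: "'v lit set set \<Rightarrow> 'v \<Rightarrow> bool" where
  "singular F v \<longleftrightarrow> min (ldeg F (Pos v)) (ldeg F (Neg v)) = 1"

end

theory Submission
  imports Defs
begin

lemma var_eq_cases: "var_lit y = var_lit x \<Longrightarrow> y = x \<or> y = comp x"
  by (cases x; cases y) auto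

lemma comp_comp[simp]: "comp (comp x) = x" by (cases x) auto
lemma comp_neq[simp]: "comp x \<noteq> x" by (cases x) auto
lemma var_comp[simp]: "var_lit (comp x) = var_lit x" by (cases x) auto
lemma lit_true_comp: "lit_true \<phi> (comp y) = (\<not> lit_true \<phi> y)" by (cases y) auto

lemma flip_sat:
  assumes uniq: "\<forall>E\<in>F. l \<in> E \<longrightarrow> E = C0"
    and D: "comp l \<in> D" and y: "y \<in> C0" "var_lit y \<noteq> var_lit l"
    and sat: "\<forall>E\<in>F-{D}. \<exists>z\<in>E. lit_true \<phi> z" and yt: "lit_true \<phi> y"
  shows "satisfiable F"
proof -
  define \<psi> where "\<psi> = (\<lambda>u. if u = var_lit l then (case l of Pos _ \<Rightarrow> False | Neg _ \<Rightarrow> True) else \<phi> u)"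
  have cl: "lit_true \<psi> (comp l)" unfolding \<psi>_def by (cases l) auto
  have same: "lit_true \<psi> z = lit_true \<phi> z" if "var_lit z \<noteq> var_lit l" for z
    using that unfolding \<psi>_def by (cases z) auto
  show ?thesis unfolding satisfiable_def
  proof (intro exI ballI)
    fix E assume E: "E \<in> F"
    show "\<exists>x\<in>E. lit_true \<psi> x"
    proof (cases "E = D")
      case True then show ?thesis using D cl by blast
    next
      case False
      then obtain z where z: "z \<in> E" "lit_true \<phi> z" using sat E by blast
      show ?thesis
      proof (cases "var_lit z = var_lit l")
        case False then show ?thesis using z same by blast
      next
        case True
        then have "z = l \<or> z = comp l" by (rule var_eq_cases)
        then show ?thesis
        proof
          assume "z = l"
          then have "E = C0" using uniq E z by blast
          then show ?thesis using y yt same by blast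
        next
          assume "z = comp l" then show ?thesis using z cl by blast
        qed
      qed
    qed
  qed
qed

lemma key:
  assumes satu: "saturated F" and uniq: "\<forall>E\<in>F. l \<in> E \<longrightarrow> E = C0"
    and C0: "C0 \<in> F" "l \<in> C0"
    and D: "D \<in> F" "comp l \<in> D" and y: "y \<in> C0" "y \<noteq> l"
  shows "y \<in> D"
proof (rule ccontr)
  assume yD: "y \<notin> D"
  have mu: "min_unsat F" using satu saturated_def by blast
  have clC0: "clause C0" using mu C0 unfolding min_unsat_def clause_set_def by blast
  have clD: "clause D" using mu D unfolding min_unsat_def clause_set_def by blast
  have vy: "var_lit y \<noteq> var_lit l"
  proof
    assume "var_lit y = var_lit l"
    then have "y = l \<or> y = comp l" by (rule var_eq_cases)
    then show False using y clC0 C0 unfolding clause_def by auto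
  qed
  have unsat: "\<not> satisfiable F" using mu min_unsat_def by blast
  show False
  proof (cases "comp y \<in> D")
    case True
    have "satisfiable (F - {D})" using mu D min_unsat_def by blast
    then obtain \<phi> where \<phi>: "\<forall>E\<in>F-{D}. \<exists>z\<in>E. lit_true \<phi> z" unfolding satisfiable_def by blast
    have "\<not> (\<exists>z\<in>D. lit_true \<phi> z)"
    proof
      assume "\<exists>z\<in>D. lit_true \<phi> z"
      then have "satisfiable F" using \<phi> unfolding satisfiable_def by blast
      then show False using unsat by blast
    qed
    then have "lit_true \<phi> y" using True lit_true_comp by metis
    then show False using flip_sat[OF uniq D(2) y(1) vy \<phi>] unsat by blast
  next
    case False
    have "var_lit y \<notin> vars_cl D"
    proof
      assume "var_lit y \<in> vars_cl D"
      then obtain z where "z \<in> D" "var_lit z = var_lit y" unfolding vars_cl_def by auto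
      then show False using var_eq_cases[of z y] yD False by auto
    qed
    moreover have "var_lit y \<in> vars F" using C0 y unfolding vars_def vars_cl_def by blast
    ultimately have "satisfiable ((F - {D}) \<union> {D \<union> {y}})"
      using satu D unfolding saturated_def by blast
    then obtain \<phi> where \<phi>: "\<forall>E\<in>(F - {D}) \<union> {D \<union> {y}}. \<exists>z\<in>E. lit_true \<phi> z"
      unfolding satisfiable_def by blast
    have \<phi>1: "\<forall>E\<in>F-{D}. \<exists>z\<in>E. lit_true \<phi> z" using \<phi> by blast
    have "\<not> (\<exists>z\<in>D. lit_true \<phi> z)"
    proof
      assume "\<exists>z\<in>D. lit_true \<phi> z"
      then have "\<forall>E\<in>F. \<exists>z\<in>E. lit_true \<phi> z" using \<phi>1 by (metis DiffI singletonD)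
      then have "satisfiable F" unfolding satisfiable_def by blast
      then show False using unsat by blast
    qed
    moreover have "\<exists>z\<in>D \<union> {y}. lit_true \<phi> z" using \<phi> by simp
    ultimately have "lit_true \<phi> y" by auto
    then show False using flip_sat[OF uniq D(2) y(1) vy \<phi>1] unsat by blast
  qed
qed

theorem corollary26:
  fixes F :: "'v lit set set" and v :: 'v
  assumes "saturated F" and "singular F v"
  shows "(\<forall>x. ldeg (DP v F) x \<le> ldeg F x) \<and>
         (\<forall>w. w \<noteq> v \<and> singular F w \<longrightarrow> singular (DP v F) w)"
proof -
  have satu: "saturated F" using assms(1) .
  have mu: "min_unsat F" using satu saturated_def by blast
  have finF: "finite F" and clF: "\<forall>C\<in>F. clause C"
    using mu unfolding min_unsat_def clause_set_def by auto
  have sg: "min (ldeg F (Pos v)) (ldeg F (Neg v)) = 1" using assms(2) unfolding singular_def .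
  have disj: "(ldeg F (Pos v) = 1 \<and> ldeg F (Neg v) \<ge> 1) \<or> (ldeg F (Neg v) = 1 \<and> ldeg F (Pos v) \<ge> 1)"
    using sg by (simp add: min_def split: if_splits)
  obtain l where l: "l = Pos v \<or> l = Neg v" "ldeg F l = 1" "ldeg F (comp l) \<ge> 1"
  proof (cases "ldeg F (Pos v) = 1 \<and> ldeg F (Neg v) \<ge> 1")
    case True
    show ?thesis by (rule that[of "Pos v"]) (use True in simp_all)
  next
    case False
    then have "ldeg F (Neg v) = 1 \<and> ldeg F (Pos v) \<ge> 1" using disj by blast
    then show ?thesis by (intro that[of "Neg v"]) simp_all
  qed
  have vl: "var_lit l = v" using l(1) by auto
  have vcl: "var_lit (comp l) = v" using vl by simp
  have "card {C \<in> F. l \<in> C} = 1" using l(2) ldeg_def by metis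
  then obtain C0 where C0s: "{C \<in> F. l \<in> C} = {C0}" by (rule card_1_singletonE)
  have C0: "C0 \<in> F" "l \<in> C0" using C0s by auto
  have uniq: "\<forall>E\<in>F. l \<in> E \<longrightarrow> E = C0" using C0s by auto
  have K: "C0 - {l} \<subseteq> D" if "D \<in> F" "comp l \<in> D" for D
    using key[OF satu uniq C0 that] by blast
  have clC0: "clause C0" using clF C0 by blast
  have nc: "comp l \<notin> C0" using clC0 C0 unfolding clause_def by blast
  have lD: "l \<notin> D" if "D \<in> F" "comp l \<in> D" for D
    using clF that unfolding clause_def by (metis comp_comp)
  have resolv: "(C0 \<union> D) - {Pos v, Neg v} = D - {comp l}" if "D \<in> F" "comp l \<in> D" for D
  proof -
    have "{Pos v, Neg v} = {l, comp l}" using l(1) by auto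
    then show ?thesis using K[OF that] lD[OF that] C0 by auto
  qed
  have clash: "C0 \<inter> comp ` D = {l}" if "D \<in> F" "comp l \<in> D" for D
  proof
    show "{l} \<subseteq> C0 \<inter> comp ` D" using C0 that(2) by (auto intro: image_eqI[where x="comp l"])
    show "C0 \<inter> comp ` D \<subseteq> {l}"
    proof
      fix z assume z: "z \<in> C0 \<inter> comp ` D"
      then obtain d where d: "d \<in> D" "z = comp d" by blast
      show "z \<in> {l}"
      proof (rule ccontr)
        assume "z \<notin> {l}"
        then have "z \<in> D" using K[OF that] z by blast
        then show False using clF that(1) d unfolding clause_def by metis
      qed
    qed
  qed
  have clash2: "D \<inter> comp ` C0 = {comp l}" if "D \<in> F" "comp l \<in> D" for D
  proof
    show "{comp l} \<subseteq> D \<inter> comp ` C0" using C0 that(2) by (auto intro: image_eqI[where x="l"])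
    show "D \<inter> comp ` C0 \<subseteq> {comp l}"
    proof
      fix z assume z: "z \<in> D \<inter> comp ` C0"
      then obtain c where c: "c \<in> C0" "z = comp c" by blast
      show "z \<in> {comp l}"
      proof (rule ccontr)
        assume "z \<notin> {comp l}"
        then have "c \<noteq> l" using c by auto
        then have "c \<in> D" using K[OF that] c by blast
        then show False using clF that(1) c z unfolding clause_def by blast
      qed
    qed
  qed
  have Pv: "Pos v \<in> C" "Neg v \<in> D" if "C \<inter> comp ` D = {Pos v}" for C D :: "'v lit set"
  proof -
    have "Pos v \<in> comp ` D" using that by blast
    then obtain d where "d \<in> D" "Pos v = comp d" by blast
    then show "Neg v \<in> D" by (cases d) auto
    show "Pos v \<in> C" using that by blast
  qed
  have varsE: "v \<notin> vars_cl (E - {Pos v, Neg v})" for E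
  proof
    assume "v \<in> vars_cl (E - {Pos v, Neg v})"
    then obtain z where "z \<in> E - {Pos v, Neg v}" "var_lit z = v" unfolding vars_cl_def by blast
    then show False by (cases z) auto
  qed
  have A: "v \<notin> vars_cl E \<and> (E \<in> F \<or> E \<union> {comp l} \<in> F)" if E: "E \<in> DP v F" for E
  proof (cases "E \<in> F \<and> v \<notin> vars_cl E")
    case True then show ?thesis by blast
  next
    case False
    then obtain C D where CD: "E = (C \<union> D) - {Pos v, Neg v}" "C \<in> F" "D \<in> F"
      "C \<inter> comp ` D = {Pos v}" using E unfolding DP_def by blast
    have p: "Pos v \<in> C" "Neg v \<in> D" using Pv[OF CD(4)] by auto
    show ?thesis
    proof (cases "l = Pos v")
      case True
      then have "C = C0" using uniq CD(2) p by blast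
      then have "E = D - {comp l}" using resolv[of D] CD True p by simp
      moreover have "comp l \<in> D" using True p by simp
      ultimately show ?thesis using varsE CD(1) CD(3) by (metis insert_Diff_single insert_absorb insert_is_Un sup_commute)
    next
      case False
      then have ln: "l = Neg v" using l(1) by blast
      then have "D = C0" using uniq CD(3) p by blast
      then have "E = C - {comp l}" using resolv[of C] CD ln p by (simp add: Un_commute)
      moreover have "comp l \<in> C" using ln p by simp
      ultimately show ?thesis using varsE CD(1) CD(2) by (metis insert_Diff_single insert_absorb insert_is_Un sup_commute)
    qed
  qed
  have B: "D - {comp l} \<in> DP v F" if "D \<in> F" "comp l \<in> D" for D
  proof (cases "l = Pos v")
    case True
    have "C0 \<inter> comp ` D = {Pos v}" using clash[OF that] True by simp
    then have "(C0 \<union> D) - {Pos v, Neg v} \<in> DP v F" using C0 that unfolding DP_def by blast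
    then show ?thesis using resolv[OF that] by simp
  next
    case False
    then have ln: "l = Neg v" using l(1) by blast
    have "D \<inter> comp ` C0 = {Pos v}" using clash2[OF that] ln by simp
    then have "(D \<union> C0) - {Pos v, Neg v} \<in> DP v F" using C0 that unfolding DP_def by blast
    then show ?thesis using resolv[OF that] by (simp add: Un_commute)
  qed
  have finDP: "finite (DP v F)"
  proof -
    have "DP v F \<subseteq> F \<union> (\<lambda>(C,D). (C \<union> D) - {Pos v, Neg v}) ` (F \<times> F)"
      unfolding DP_def by fastforce
    then show ?thesis using finF by (meson finite_SigmaI finite_UnI finite_imageI finite_subset)
  qed
  have P1: "ldeg (DP v F) x \<le> ldeg F x" for x
  proof -
    define f where "f = (\<lambda>E. if E \<in> F then E else E \<union> {comp l})"
    have "inj_on f {E \<in> DP v F. x \<in> E}"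
    proof
      fix E1 E2 assume E1: "E1 \<in> {E \<in> DP v F. x \<in> E}" and E2: "E2 \<in> {E \<in> DP v F. x \<in> E}"
        and eq: "f E1 = f E2"
      have n1: "comp l \<notin> E1" using A[of E1] E1 vcl unfolding vars_cl_def by (metis image_eqI mem_Collect_eq)
      have n2: "comp l \<notin> E2" using A[of E2] E2 vcl unfolding vars_cl_def by (metis image_eqI mem_Collect_eq)
      show "E1 = E2"
        using eq n1 n2 unfolding f_def by (auto split: if_splits simp: insert_ident)
    qed
    moreover have "f ` {E \<in> DP v F. x \<in> E} \<subseteq> {C \<in> F. x \<in> C}"
      using A unfolding f_def by auto
    ultimately have "card {E \<in> DP v F. x \<in> E} \<le> card {C \<in> F. x \<in> C}"
      using finF by (intro card_inj_on_le) auto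
    then show ?thesis unfolding ldeg_def .
  qed
  obtain D0 where D0: "D0 \<in> F" "comp l \<in> D0"
  proof -
    have "{C \<in> F. comp l \<in> C} \<noteq> {}" using l(3) unfolding ldeg_def by (metis card.empty not_one_le_zero)
    then show ?thesis using that by blast
  qed
  have occ: "ldeg (DP v F) x \<ge> 1" if "var_lit x \<noteq> v" "ldeg F x \<ge> 1" for x
  proof -
    have "{C \<in> F. x \<in> C} \<noteq> {}" using that(2) unfolding ldeg_def by (metis card.empty not_one_le_zero)
    then obtain C where C: "C \<in> F" "x \<in> C" by blast
    have "\<exists>E\<in>DP v F. x \<in> E"
    proof (cases "v \<in> vars_cl C")
      case False then show ?thesis using C unfolding DP_def by blast
    next
      case True
      then obtain z where z: "z \<in> C" "var_lit z = v" unfolding vars_cl_def by blast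
      then have "z = l \<or> z = comp l" using var_eq_cases[of z l] vl by simp
      then show ?thesis
      proof
        assume "z = l"
        then have "C = C0" using uniq C z by blast
        then have "x \<in> C0 - {l}" using C that(1) vl by auto
        then have "x \<in> D0" using K[OF D0] by blast
        moreover have "x \<noteq> comp l" using that(1) vcl by auto
        ultimately have "x \<in> D0 - {comp l}" by blast
        then show ?thesis using B[OF D0] by (rule bexI)
      next
        assume "z = comp l"
        moreover have "x \<noteq> comp l" using that(1) vcl by auto
        ultimately have xC: "x \<in> C - {comp l}" using C by blast
        have "comp l \<in> C" using \<open>z = comp l\<close> z by simp
        from B[OF C(1) this] xC show ?thesis by (rule bexI[rotated])
      qed
    qed
    then have "{E \<in> DP v F. x \<in> E} \<noteq> {}" by blast
    then have "card {E \<in> DP v F. x \<in> E} > 0" using finDP by (simp add: card_gt_0_iff)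
    then show ?thesis unfolding ldeg_def by simp
  qed
  have P2: "singular (DP v F) w" if "w \<noteq> v" "singular F w" for w
  proof -
    have m: "min (ldeg F (Pos w)) (ldeg F (Neg w)) = 1" using that(2) unfolding singular_def .
    have a: "ldeg (DP v F) (Pos w) \<ge> 1" using occ[of "Pos w"] m that(1) by (simp add: min_def split: if_splits)
    have b: "ldeg (DP v F) (Neg w) \<ge> 1" using occ[of "Neg w"] m that(1) by (simp add: min_def split: if_splits)
    have "ldeg (DP v F) (Pos w) \<le> ldeg F (Pos w)" "ldeg (DP v F) (Neg w) \<le> ldeg F (Neg w)" using P1 by auto
    then show ?thesis unfolding singular_def using a b m by (simp add: min_def split: if_splits)
  qed
  show ?thesis using P1 P2 by blast
qed

end
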